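(* The genus of a based matrix over a domain $R$ is a homology invariant: homologous based matrices over $R$ have equal genus.
   Context: $R$ is a commutative ring with unit and no zero-divisors. A based matrix over $R$ is a triple $(G,s,b)$, $G$ a finite set, $s\in G$, $b:G\times G\to R$ with $b(g,h)=-b(h,g)$, $b(g,g)=0$. For $X,Y\subset G$, $b(X,Y)=\sum_{g\in X,h\in Y}b(g,h)$. A filling of $T=(G,s,b)$ is a finite family $\{X_i\}$ of pairwise disjoint (possibly empty) subsets of $G$ with $\bigcup X_i=G$, $\#X_i\le2$ for all $i$, and one $X_i$ equal to $\{s\}$; its matrix is $(b(X_i,X_j))_{i,j}$, and $\sigma(\{X_i\})$ is half the rank (maximal size of a nonzero minor) of this matrix. The genus is $\sigma(T)=\min\sigma(\mathcal{X})$ over all fillings $\mathcal{X}$. Elementary extensions: $M_1$ adds a new element $g$ with $b(g,h)=0$ for all $h$; $M_2$ adds $g$ with $b(g,h)=b(s,h)$ for all $h$; $M_3$ adds $g_1,g_2$ with a skew-symmetric zero-diagonal extension such that $b(g_1,h)+b(g_2,h)=b(s,h)$ for all $h$. Isomorphism: bijection sending $s$ to $s'$ and $b$ to $b'$. Homologous: related by elementary extensions, their inverses and isomorphisms. *)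

theory Defs
  imports Main "Jordan_Normal_Form.Determinant" "Jordan_Normal_Form.DL_Submatrix"
begin

text \<open>Only the values of b on G x G are relevant.\<close>

type_synonym ('a, 'r) based_matrix = "'a set \<times> 'a \<times> ('a \<Rightarrow> 'a \<Rightarrow> 'r)"

definition based_matrix :: "('a, 'r::idom) based_matrix \<Rightarrow> bool" where
  "based_matrix T \<longleftrightarrow> (case T of (G, s, b) \<Rightarrow>
     finite G \<and> s \<in> G \<and> (\<forall>g\<in>G. \<forall>h\<in>G. b g h = - b h g) \<and> (\<forall>g\<in>G. b g g = 0))"

definition bsum :: "('a \<Rightarrow> 'a \<Rightarrow> 'r::idom) \<Rightarrow> 'a set \<Rightarrow> 'a set \<Rightarrow> 'r" where
  "bsum b X Y = (\<Sum>g\<in>X. \<Sum>h\<in>Y. b g h)"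

definition minor_rank :: "'r::idom mat \<Rightarrow> nat" where
  "minor_rank A = Max {k. \<exists>I J. I \<subseteq> {..<dim_row A} \<and> J \<subseteq> {..<dim_col A} \<and>
       card I = k \<and> card J = k \<and> det (submatrix A I J) \<noteq> 0}"

definition is_filling :: "('a, 'r::idom) based_matrix \<Rightarrow> 'a set list \<Rightarrow> bool" where
  "is_filling T Xs \<longleftrightarrow> (case T of (G, s, b) \<Rightarrow>
     (\<forall>i<length Xs. \<forall>j<length Xs. i \<noteq> j \<longrightarrow> Xs ! i \<inter> Xs ! j = {}) \<and>
     (\<Union>(set Xs)) = G \<and>
     (\<forall>X\<in>set Xs. finite X \<and> card X \<le> 2) \<and>
     {s} \<in> set Xs)"

definition filling_matrix :: "('a, 'r::idom) based_matrix \<Rightarrow> 'a set list \<Rightarrow> 'r mat" where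
  "filling_matrix T Xs = (case T of (G, s, b) \<Rightarrow>
     mat (length Xs) (length Xs) (\<lambda>(i, j). bsum b (Xs ! i) (Xs ! j)))"

definition filling_sigma :: "('a, 'r::idom) based_matrix \<Rightarrow> 'a set list \<Rightarrow> real" where
  "filling_sigma T Xs = real (minor_rank (filling_matrix T Xs)) / 2"

definition genus :: "('a, 'r::idom) based_matrix \<Rightarrow> real" where
  "genus T = Inf {filling_sigma T Xs | Xs. is_filling T Xs}"

definition ext_M1 :: "('a, 'r::idom) based_matrix \<Rightarrow> ('a, 'r) based_matrix \<Rightarrow> bool" where
  "ext_M1 T T' \<longleftrightarrow> (case T of (G, s, b) \<Rightarrow> case T' of (G', s', b') \<Rightarrow>
     based_matrix T \<and> based_matrix T' \<and> s' = s \<and>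
     (\<exists>g. g \<notin> G \<and> G' = insert g G \<and>
        (\<forall>x\<in>G. \<forall>y\<in>G. b' x y = b x y) \<and> (\<forall>h\<in>G'. b' g h = 0)))"

definition ext_M2 :: "('a, 'r::idom) based_matrix \<Rightarrow> ('a, 'r) based_matrix \<Rightarrow> bool" where
  "ext_M2 T T' \<longleftrightarrow> (case T of (G, s, b) \<Rightarrow> case T' of (G', s', b') \<Rightarrow>
     based_matrix T \<and> based_matrix T' \<and> s' = s \<and>
     (\<exists>g. g \<notin> G \<and> G' = insert g G \<and>
        (\<forall>x\<in>G. \<forall>y\<in>G. b' x y = b x y) \<and> (\<forall>h\<in>G. b' g h = b s h)))"

definition ext_M3 :: "('a, 'r::idom) based_matrix \<Rightarrow> ('a, 'r) based_matrix \<Rightarrow> bool" where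
  "ext_M3 T T' \<longleftrightarrow> (case T of (G, s, b) \<Rightarrow> case T' of (G', s', b') \<Rightarrow>
     based_matrix T \<and> based_matrix T' \<and> s' = s \<and>
     (\<exists>g1 g2. g1 \<notin> G \<and> g2 \<notin> G \<and> g1 \<noteq> g2 \<and> G' = insert g1 (insert g2 G) \<and>
        (\<forall>x\<in>G. \<forall>y\<in>G. b' x y = b x y) \<and> (\<forall>h\<in>G. b' g1 h + b' g2 h = b s h)))"

definition elem_ext :: "('a, 'r::idom) based_matrix \<Rightarrow> ('a, 'r) based_matrix \<Rightarrow> bool" where
  "elem_ext T T' \<longleftrightarrow> ext_M1 T T' \<or> ext_M2 T T' \<or> ext_M3 T T'"

definition bm_iso :: "('a, 'r::idom) based_matrix \<Rightarrow> ('a, 'r) based_matrix \<Rightarrow> bool" where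
  "bm_iso T T' \<longleftrightarrow> (case T of (G, s, b) \<Rightarrow> case T' of (G', s', b') \<Rightarrow>
     based_matrix T \<and> based_matrix T' \<and>
     (\<exists>f. bij_betw f G G' \<and> f s = s' \<and> (\<forall>x\<in>G. \<forall>y\<in>G. b' (f x) (f y) = b x y)))"

inductive homologous :: "('a, 'r::idom) based_matrix \<Rightarrow> ('a, 'r) based_matrix \<Rightarrow> bool" where
  iso: "bm_iso T T' \<Longrightarrow> homologous T T'"
| ext: "elem_ext T T' \<Longrightarrow> homologous T T'"
| ext_inv: "elem_ext T' T \<Longrightarrow> homologous T T'"
| trans: "homologous T1 T2 \<Longrightarrow> homologous T2 T3 \<Longrightarrow> homologous T1 T3"

end

theory Submission
  imports Defs
begin

lemma pick_unique:
  assumes fin: "finite S" and x: "x \<in> S" and j: "j < card S"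
  shows "pick S j = x \<longleftrightarrow> j = card {a\<in>S. a < x}"
proof -
  let ?j0 = "card {a\<in>S. a < x}"
  have p0: "pick S ?j0 = x" by (rule pick_card_in_set[OF x])
  have j0: "?j0 < card S"
    by (rule psubset_card_mono[OF fin], use x in auto)
  show ?thesis
  proof
    assume "pick S j = x"
    then show "j = ?j0"
      using pick_mono[of ?j0 S j] pick_mono[of j S ?j0] j j0 p0
      by (metis nat_neq_iff order_less_irrefl)
  qed (use p0 in simp)
qed

lemma det_rows_sel_zero:
  fixes B :: "'a::idom mat"
  assumes B: "B \<in> carrier_mat n k"
    and f: "\<forall>i<k. f i < n"
    and minors: "\<And>I. I \<subseteq> {..<n} \<Longrightarrow> card I = k \<Longrightarrow> det (submatrix B I UNIV) = 0"
  shows "det (mat\<^sub>r k k (\<lambda>i. row B (f i))) = 0"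
proof (cases "inj_on f {0..<k}")
  case False
  then obtain i j where ij: "f i = f j" "i \<noteq> j" "i < k" "j < k"
    unfolding inj_on_def by auto
  have r1: "row (mat\<^sub>r k k (\<lambda>i. row B (f i))) i = row B (f i)"
    by (rule row_mat_of_row_fun, use ij B in auto)
  have r2: "row (mat\<^sub>r k k (\<lambda>i. row B (f i))) j = row B (f j)"
    by (rule row_mat_of_row_fun, use ij B in auto)
  show ?thesis
    by (rule det_identical_rows[OF _ ij(2-4)], simp, unfold r1 r2 ij(1), rule refl)
next
  case True
  define S where "S = f ` {0..<k}"
  have cS: "card S = k" unfolding S_def using card_image[OF True] by simp
  have Sn: "S \<subseteq> {..<n}" unfolding S_def using f by auto
  have finS: "finite S" unfolding S_def by simp
  define Sub where "Sub = submatrix B S UNIV"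
  have rS: "{i. i < n \<and> i \<in> S} = S" using Sn by auto
  have Sub: "Sub \<in> carrier_mat k k"
  proof -
    have "dim_row B = n" "dim_col B = k" using B by auto
    then show ?thesis unfolding Sub_def carrier_mat_def by (simp add: dim_submatrix rS cS)
  qed
  have Subidx: "Sub $$ (j, j') = B $$ (pick S j, j')" if "j < k" "j' < k" for j j'
  proof -
    have "dim_row B = n" "dim_col B = k" using B by auto
    then show ?thesis unfolding Sub_def using that by (subst submatrix_index, simp_all add: rS cS pick_UNIV)
  qed
  define C where "C = mat k k (\<lambda>(i,j). if pick S j = f i then 1 else (0::'a))"
  have C: "C \<in> carrier_mat k k" unfolding C_def by simp
  have eq: "C * Sub = mat\<^sub>r k k (\<lambda>i. row B (f i))"
  proof (rule eq_matI)
    fix i j' assume i: "i < dim_row (mat\<^sub>r k k (\<lambda>i. row B (f i)))"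
      and j': "j' < dim_col (mat\<^sub>r k k (\<lambda>i. row B (f i)))"
    then have i: "i < k" and j': "j' < k" by auto
    have fiS: "f i \<in> S" unfolding S_def using i by auto
    have "(C * Sub) $$ (i, j') = (\<Sum>j<k. C $$ (i,j) * Sub $$ (j, j'))"
      using C Sub i j' by (simp add: scalar_prod_def lessThan_atLeast0)
    also have "\<dots> = (\<Sum>j<k. if j = card {a\<in>S. a < f i} then B $$ (f i, j') else 0)"
    proof (rule sum.cong[OF refl])
      fix j assume j: "j \<in> {..<k}"
      have pu: "pick S j = f i \<longleftrightarrow> j = card {a\<in>S. a < f i}"
        using pick_unique[OF finS fiS, of j] j cS by simp
      show "C $$ (i,j) * Sub $$ (j, j') = (if j = card {a\<in>S. a < f i} then B $$ (f i, j') else 0)"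
        using j i j' by (simp add: C_def Subidx pu[symmetric])
    qed
    also have "\<dots> = B $$ (f i, j')"
    proof -
      have "card {a\<in>S. a < f i} < k"
        using psubset_card_mono[OF finS, of "{a\<in>S. a < f i}"] fiS cS by auto
      then show ?thesis by simp
    qed
    finally show "(C * Sub) $$ (i, j') = mat\<^sub>r k k (\<lambda>i. row B (f i)) $$ (i, j')"
      using i j' f B by auto
  qed (use C Sub in auto)
  have "det Sub = 0" unfolding Sub_def by (rule minors[OF Sn cS])
  then show ?thesis unfolding eq[symmetric] det_mult[OF C Sub] by simp
qed

lemma det_prod_minor:
  fixes A B :: "'a::idom mat"
  assumes A: "A \<in> carrier_mat k n" and B: "B \<in> carrier_mat n k"
    and minors: "\<And>I. I \<subseteq> {..<n} \<Longrightarrow> card I = k \<Longrightarrow> det (submatrix B I UNIV) = 0"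
  shows "det (A * B) = 0"
proof -
  let ?U = "{0..<k}"
  let ?F = "{f. (\<forall>i\<in>?U. f i \<in> {0..<n}) \<and> (\<forall>i. i \<notin> ?U \<longrightarrow> f i = i)}"
  have "det (A * B) = (\<Sum>f\<in>?F. det (mat\<^sub>r k k (\<lambda>i. A $$ (i, f i) \<cdot>\<^sub>v row B (f i))))"
    unfolding mat_mul_finsum_alt[OF A B]
    by (rule det_linear_rows_sum, simp, use A B in auto)
  also have "\<dots> = 0"
  proof (rule sum.neutral, rule ballI)
    fix f assume "f \<in> ?F"
    then have f: "\<forall>i<k. f i < n" by auto
    have "det (mat\<^sub>r k k (\<lambda>i. A $$ (i, f i) \<cdot>\<^sub>v row B (f i))) =
       prod (\<lambda>i. A $$ (i, f i)) ?U * det (mat\<^sub>r k k (\<lambda>i. row B (f i)))"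
      by (rule det_rows_mul, use B in auto)
    also have "det (mat\<^sub>r k k (\<lambda>i. row B (f i))) = 0"
      by (rule det_rows_sel_zero[OF B f minors])
    finally show "det (mat\<^sub>r k k (\<lambda>i. A $$ (i, f i) \<cdot>\<^sub>v row B (f i))) = 0" by simp
  qed
  finally show ?thesis .
qed

lemma submatrix_mult_eq:
  assumes A: "A \<in> carrier_mat m n" and N: "N \<in> carrier_mat n p"
    and I: "I \<subseteq> {..<m}" and J: "J \<subseteq> {..<p}"
  shows "submatrix (A * N) I J = submatrix A I UNIV * submatrix N UNIV J"
proof -
  have dA: "dim_row A = m" "dim_col A = n" and dN: "dim_row N = n" "dim_col N = p" using A N by auto
  have rI: "{i. i < m \<and> i \<in> I} = I" using I by auto
  have rJ: "{i. i < p \<and> i \<in> J} = J" using J by auto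
  have rU: "{i. i < n \<and> i \<in> UNIV} = {..<n}" by auto
  have fI: "finite I" using I finite_subset by blast
  have fJ: "finite J" using J finite_subset by blast
  show ?thesis
  proof (rule eq_matI)
    fix i j assume i: "i < dim_row (submatrix A I UNIV * submatrix N UNIV J)"
      and j: "j < dim_col (submatrix A I UNIV * submatrix N UNIV J)"
    then have i: "i < card I" and j: "j < card J" by (simp_all add: dim_submatrix dA dN rI rJ)
    have pI: "pick I i < m" using pick_in_set[of i I] i I by auto
    have pJ: "pick J j < p" using pick_in_set[of j J] j J by auto
    have "submatrix (A * N) I J $$ (i, j) = (A * N) $$ (pick I i, pick J j)"
      by (rule submatrix_index, simp_all add: dA dN rI rJ i j)
    also have "\<dots> = (\<Sum>l<n. A $$ (pick I i, l) * N $$ (l, pick J j))"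
      using pI pJ dA dN by (simp add: scalar_prod_def lessThan_atLeast0)
    also have "\<dots> = (submatrix A I UNIV * submatrix N UNIV J) $$ (i, j)"
      using i j dA dN
      by (simp add: dim_submatrix rI rJ rU scalar_prod_def lessThan_atLeast0 submatrix_index pick_UNIV)
    finally show "submatrix (A * N) I J $$ (i, j) = (submatrix A I UNIV * submatrix N UNIV J) $$ (i, j)" .
  qed (simp_all add: dim_submatrix dA dN)
qed

lemma minor_left:
  fixes A N :: "'a::idom mat"
  assumes A: "A \<in> carrier_mat m n" and N: "N \<in> carrier_mat n p"
    and I: "I \<subseteq> {..<m}" and J: "J \<subseteq> {..<p}" and cI: "card I = k" and cJ: "card J = k"
    and nz: "det (submatrix (A * N) I J) \<noteq> 0"
  shows "\<exists>I'. I' \<subseteq> {..<n} \<and> card I' = k \<and> det (submatrix N I' J) \<noteq> 0"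
proof (rule ccontr)
  assume nt: "\<not> ?thesis"
  have minors: "\<And>I'. I' \<subseteq> {..<n} \<Longrightarrow> card I' = k \<Longrightarrow> det (submatrix (submatrix N UNIV J) I' UNIV) = 0"
  proof -
    fix I' assume "I' \<subseteq> {..<n}" "card I' = k"
    then have "det (submatrix N I' J) = 0" using nt by blast
    then show "det (submatrix (submatrix N UNIV J) I' UNIV) = 0" unfolding submatrix_split[symmetric] .
  qed
  have dA: "dim_row A = m" "dim_col A = n" and dN: "dim_row N = n" "dim_col N = p" using A N by auto
  have rI: "{i. i < m \<and> i \<in> I} = I" using I by auto
  have rJ: "{i. i < p \<and> i \<in> J} = J" using J by auto
  have rU: "{i. i < n \<and> i \<in> UNIV} = {..<n}" by auto
  have c1: "submatrix A I UNIV \<in> carrier_mat k n"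
    unfolding carrier_mat_def by (simp add: dim_submatrix dA rI rU cI)
  have c2: "submatrix N UNIV J \<in> carrier_mat n k"
    unfolding carrier_mat_def by (simp add: dim_submatrix dN rJ rU cJ)
  have "det (submatrix (A * N) I J) = 0"
    unfolding submatrix_mult_eq[OF A N I J] by (rule det_prod_minor[OF c1 c2 minors])
  with nz show False by simp
qed

lemma submatrix_transpose:
  assumes I: "I \<subseteq> {..<dim_row A}" and J: "J \<subseteq> {..<dim_col A}"
  shows "submatrix (transpose_mat A) J I = transpose_mat (submatrix A I J)"
proof -
  have rI: "{i. i < dim_row A \<and> i \<in> I} = I" using I by auto
  have rJ: "{i. i < dim_col A \<and> i \<in> J} = J" using J by auto
  show ?thesis
  proof (rule eq_matI)
    fix i j assume i: "i < dim_row (transpose_mat (submatrix A I J))"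
      and j: "j < dim_col (transpose_mat (submatrix A I J))"
    then have i: "i < card J" and j: "j < card I" by (simp_all add: dim_submatrix rI rJ)
    have pI: "pick I j < dim_row A" using pick_in_set[of j I] j I by auto
    have pJ: "pick J i < dim_col A" using pick_in_set[of i J] i J by auto
    show "submatrix (transpose_mat A) J I $$ (i, j) = transpose_mat (submatrix A I J) $$ (i, j)"
      using i j pI pJ by (simp add: dim_submatrix rI rJ submatrix_index)
  qed (simp_all add: dim_submatrix)
qed

lemma minor_right:
  fixes N B :: "'a::idom mat"
  assumes N: "N \<in> carrier_mat n p" and B: "B \<in> carrier_mat p q"
    and I: "I \<subseteq> {..<n}" and J: "J \<subseteq> {..<q}" and cI: "card I = k" and cJ: "card J = k"
    and nz: "det (submatrix (N * B) I J) \<noteq> 0"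
  shows "\<exists>J'. J' \<subseteq> {..<p} \<and> card J' = k \<and> det (submatrix N I J') \<noteq> 0"
proof -
  have dN: "dim_row N = n" "dim_col N = p" and dB: "dim_row B = p" "dim_col B = q" using N B by auto
  have rI: "{i. i < n \<and> i \<in> I} = I" using I by auto
  have rJ: "{i. i < q \<and> i \<in> J} = J" using J by auto
  have c: "submatrix (N * B) I J \<in> carrier_mat k k"
    unfolding carrier_mat_def by (simp add: dim_submatrix dN dB rI rJ cI cJ)
  have "submatrix (transpose_mat B * transpose_mat N) J I = transpose_mat (submatrix (N * B) I J)"
  proof -
    have "submatrix (transpose_mat (N * B)) J I = transpose_mat (submatrix (N * B) I J)"
      by (rule submatrix_transpose, use I J N B in auto)
    then show ?thesis unfolding transpose_mult[OF N B] .
  qed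
  then have "det (submatrix (transpose_mat B * transpose_mat N) J I) \<noteq> 0"
    using det_transpose[OF c] nz by simp
  have Bt: "transpose_mat B \<in> carrier_mat q p" and Nt: "transpose_mat N \<in> carrier_mat p n"
    using B N by auto
  obtain J' where J': "J' \<subseteq> {..<p}" "card J' = k" "det (submatrix (transpose_mat N) J' I) \<noteq> 0"
    using minor_left[OF Bt Nt J I cJ cI \<open>det (submatrix (transpose_mat B * transpose_mat N) J I) \<noteq> 0\<close>] by blast
  have rJ': "{i. i < p \<and> i \<in> J'} = J'" using J' by auto
  have c': "submatrix N I J' \<in> carrier_mat k k"
    unfolding carrier_mat_def by (simp add: dim_submatrix dN rI rJ' cI J')
  have "submatrix (transpose_mat N) J' I = transpose_mat (submatrix N I J')"
    by (rule submatrix_transpose, use I J' N in auto)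
  then show ?thesis using J' det_transpose[OF c'] by auto
qed

lemma minor_rank_zero_in:
  "0 \<in> {k. \<exists>I J. I \<subseteq> {..<dim_row A} \<and> J \<subseteq> {..<dim_col A} \<and>
       card I = k \<and> card J = k \<and> det (submatrix A I J) \<noteq> 0}"
proof -
  have "submatrix A {} {} = mat 0 0 (\<lambda>_. 0)"
    by (rule eq_matI, simp_all add: dim_submatrix)
  moreover have "det (mat 0 0 (\<lambda>_. 0) :: 'a mat) = 1"
    by (simp add: det_def)
  ultimately show ?thesis by (intro CollectI exI[of _ "{}"], simp)
qed

lemma minor_rank_finite:
  "finite {k. \<exists>I J. I \<subseteq> {..<dim_row A} \<and> J \<subseteq> {..<dim_col A} \<and>
       card I = k \<and> card J = k \<and> det (submatrix A I J) \<noteq> 0}"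
proof (rule finite_subset[of _ "{..dim_row A}"])
  show "{k. \<exists>I J. I \<subseteq> {..<dim_row A} \<and> J \<subseteq> {..<dim_col A} \<and>
       card I = k \<and> card J = k \<and> det (submatrix A I J) \<noteq> 0} \<subseteq> {..dim_row A}"
  proof
    fix x assume "x \<in> {k. \<exists>I J. I \<subseteq> {..<dim_row A} \<and> J \<subseteq> {..<dim_col A} \<and>
       card I = k \<and> card J = k \<and> det (submatrix A I J) \<noteq> 0}"
    then obtain I where "I \<subseteq> {..<dim_row A}" "card I = x" by blast
    then have "x \<le> card {..<dim_row A}" using card_mono[of "{..<dim_row A}" I] by simp
    then show "x \<in> {..dim_row A}" by simp
  qed
qed simp

lemma ne_sketch: "x \<in> S \<Longrightarrow> S \<noteq> {}" by auto

lemma minor_rank_mult_le: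
  fixes A F B :: "'a::idom mat"
  assumes A: "A \<in> carrier_mat m n" and F: "F \<in> carrier_mat n n" and B: "B \<in> carrier_mat n q"
  shows "minor_rank (A * F * B) \<le> minor_rank F"
  unfolding minor_rank_def
proof (rule Max_mono[OF _ _ minor_rank_finite])
  show "{k. \<exists>I J. I \<subseteq> {..<dim_row (A * F * B)} \<and> J \<subseteq> {..<dim_col (A * F * B)} \<and>
       card I = k \<and> card J = k \<and> det (submatrix (A * F * B) I J) \<noteq> 0} \<noteq> {}"
    using minor_rank_zero_in[of "A * F * B"] by (rule ne_sketch)
  have AF: "A * F \<in> carrier_mat m n" using A F by auto
  show "{k. \<exists>I J. I \<subseteq> {..<dim_row (A * F * B)} \<and> J \<subseteq> {..<dim_col (A * F * B)} \<and>
       card I = k \<and> card J = k \<and> det (submatrix (A * F * B) I J) \<noteq> 0} \<subseteq>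
      {k. \<exists>I J. I \<subseteq> {..<dim_row F} \<and> J \<subseteq> {..<dim_col F} \<and>
       card I = k \<and> card J = k \<and> det (submatrix F I J) \<noteq> 0}"
  proof (rule subsetI, elim CollectE exE conjE)
    fix k I J
    assume I: "I \<subseteq> {..<dim_row (A * F * B)}" and J: "J \<subseteq> {..<dim_col (A * F * B)}"
      and cI: "card I = k" and cJ: "card J = k" and nz: "det (submatrix (A * F * B) I J) \<noteq> 0"
    have I': "I \<subseteq> {..<m}" and J': "J \<subseteq> {..<q}" using I J A B by auto
    obtain J2 where J2: "J2 \<subseteq> {..<n}" "card J2 = k" "det (submatrix (A * F) I J2) \<noteq> 0"
      using minor_right[OF AF B I' J' cI cJ nz] by blast
    obtain I2 where I2: "I2 \<subseteq> {..<n}" "card I2 = k" "det (submatrix F I2 J2) \<noteq> 0"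
      using minor_left[OF A F I' J2(1) cI J2(2) J2(3)] by blast
    show "k \<in> {k. \<exists>I J. I \<subseteq> {..<dim_row F} \<and> J \<subseteq> {..<dim_col F} \<and>
       card I = k \<and> card J = k \<and> det (submatrix F I J) \<noteq> 0}"
    proof (rule CollectI, rule exI[of _ I2], rule exI[of _ J2])
      have dF: "dim_row F = n" "dim_col F = n" using F by auto
      show "I2 \<subseteq> {..<dim_row F} \<and> J2 \<subseteq> {..<dim_col F} \<and>
        card I2 = k \<and> card J2 = k \<and> det (submatrix F I2 J2) \<noteq> 0"
        unfolding dF using I2 J2 by blast
    qed
  qed
qed

definition ind :: "'a set \<Rightarrow> 'a \<Rightarrow> 'r::idom" where
  "ind X x = (if x \<in> X then 1 else 0)"

definition Bf :: "'a set \<Rightarrow> ('a \<Rightarrow> 'a \<Rightarrow> 'r::idom) \<Rightarrow> ('a \<Rightarrow> 'r) \<Rightarrow> ('a \<Rightarrow> 'r) \<Rightarrow> 'r" where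
  "Bf G b u v = (\<Sum>x\<in>G. \<Sum>y\<in>G. u x * v y * b x y)"

lemma sum_ind_restrict:
  assumes "finite G" "X \<subseteq> G"
  shows "(\<Sum>x\<in>G. ind X x * f x) = (\<Sum>x\<in>X. f x)"
proof -
  have "(\<Sum>x\<in>G. ind X x * f x) = (\<Sum>x\<in>G. if x \<in> X then f x else 0)"
    by (rule sum.cong, auto simp: ind_def)
  also have "\<dots> = sum f (G \<inter> X)" using sum.inter_restrict[OF assms(1), of f X] by simp
  also have "G \<inter> X = X" using assms(2) by auto
  finally show ?thesis .
qed

lemma Bf_ind:
  assumes "finite G" "X \<subseteq> G" "Y \<subseteq> G"
  shows "Bf G b (ind X) (ind Y) = bsum b X Y"
proof -
  have "Bf G b (ind X) (ind Y) = (\<Sum>x\<in>G. ind X x * (\<Sum>y\<in>G. ind Y y * b x y))"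
    unfolding Bf_def by (simp add: sum_distrib_left mult.assoc)
  also have "\<dots> = (\<Sum>x\<in>X. (\<Sum>y\<in>G. ind Y y * b x y))" by (rule sum_ind_restrict[OF assms(1,2)])
  also have "\<dots> = (\<Sum>x\<in>X. (\<Sum>y\<in>Y. b x y))" by (rule sum.cong[OF refl], rule sum_ind_restrict[OF assms(1,3)])
  finally show ?thesis unfolding bsum_def .
qed

lemma Bf_lin:
  "Bf G b (\<lambda>x. \<Sum>k\<in>K. a k * f k x) (\<lambda>y. \<Sum>l\<in>L. d l * g l y) =
   (\<Sum>k\<in>K. \<Sum>l\<in>L. a k * d l * Bf G b (f k) (g l))"
proof -
  have "Bf G b (\<lambda>x. \<Sum>k\<in>K. a k * f k x) (\<lambda>y. \<Sum>l\<in>L. d l * g l y) =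
     (\<Sum>x\<in>G. \<Sum>y\<in>G. \<Sum>k\<in>K. \<Sum>l\<in>L. a k * d l * (f k x * g l y * b x y))"
    unfolding Bf_def
  proof (intro sum.cong refl)
    fix x y
    show "(\<Sum>k\<in>K. a k * f k x) * (\<Sum>l\<in>L. d l * g l y) * b x y =
      (\<Sum>k\<in>K. \<Sum>l\<in>L. a k * d l * (f k x * g l y * b x y))"
      unfolding sum_product sum_distrib_right by (intro sum.cong refl) (simp add: sum_distrib_left mult_ac)
  qed
  also have "\<dots> = (\<Sum>x\<in>G. \<Sum>k\<in>K. \<Sum>y\<in>G. \<Sum>l\<in>L. a k * d l * (f k x * g l y * b x y))"
    by (rule sum.cong[OF refl], rule sum.swap)
  also have "\<dots> = (\<Sum>k\<in>K. \<Sum>x\<in>G. \<Sum>y\<in>G. \<Sum>l\<in>L. a k * d l * (f k x * g l y * b x y))"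
    by (rule sum.swap)
  also have "\<dots> = (\<Sum>k\<in>K. \<Sum>x\<in>G. \<Sum>l\<in>L. \<Sum>y\<in>G. a k * d l * (f k x * g l y * b x y))"
    by (rule sum.cong[OF refl], rule sum.cong[OF refl], rule sum.swap)
  also have "\<dots> = (\<Sum>k\<in>K. \<Sum>l\<in>L. \<Sum>x\<in>G. \<Sum>y\<in>G. a k * d l * (f k x * g l y * b x y))"
    by (rule sum.cong[OF refl], rule sum.swap)
  also have "\<dots> = (\<Sum>k\<in>K. \<Sum>l\<in>L. a k * d l * Bf G b (f k) (g l))"
    unfolding Bf_def by (simp add: sum_distrib_left)
  finally show ?thesis .
qed

lemma Bf_lin2:
  "Bf G b u (\<lambda>y. \<Sum>l\<in>L. d l * g l y) = (\<Sum>l\<in>L. d l * Bf G b u (g l))"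
proof -
  have "Bf G b u (\<lambda>y. \<Sum>l\<in>L. d l * g l y) = Bf G b (\<lambda>x. \<Sum>k\<in>{0::nat}. 1 * u x) (\<lambda>y. \<Sum>l\<in>L. d l * g l y)"
    by simp
  also have "\<dots> = (\<Sum>l\<in>L. d l * Bf G b u (g l))" unfolding Bf_lin by simp
  finally show ?thesis .
qed

lemma Bf_add:
  "Bf G b (\<lambda>x. v x + c * u x) (\<lambda>y. v' y + c' * u y) =
   Bf G b v v' + c' * Bf G b v u + c * Bf G b u v' + c * c' * Bf G b u u"
proof -
  have "Bf G b (\<lambda>x. v x + c * u x) (\<lambda>y. v' y + c' * u y) =
    (\<Sum>x\<in>G. \<Sum>y\<in>G. (v x * v' y * b x y + c' * (v x * u y * b x y)) + (c * (u x * v' y * b x y) + c * c' * (u x * u y * b x y)))"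
    unfolding Bf_def by (intro sum.cong refl) (simp add: algebra_simps)
  also have "\<dots> = Bf G b v v' + c' * Bf G b v u + c * Bf G b u v' + c * c' * Bf G b u u"
    unfolding Bf_def by (simp only: sum.distrib sum_distrib_left add.assoc)
  finally show ?thesis .
qed

lemma Bf_diff1:
  "Bf G b (\<lambda>x. v x - c * w x) u = Bf G b v u - c * Bf G b w u"
proof -
  have "Bf G b (\<lambda>x. v x - c * w x) u = (\<Sum>x\<in>G. \<Sum>y\<in>G. v x * u y * b x y - c * (w x * u y * b x y))"
    unfolding Bf_def by (intro sum.cong refl) (simp add: algebra_simps)
  also have "\<dots> = Bf G b v u - c * Bf G b w u"
    unfolding Bf_def by (simp only: sum_subtractf sum_distrib_left)
  finally show ?thesis .
qed

lemma Bf_diff2: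
  "Bf G b u (\<lambda>y. v y - c * w y) = Bf G b u v - c * Bf G b u w"
proof -
  have "Bf G b u (\<lambda>y. v y - c * w y) = (\<Sum>x\<in>G. \<Sum>y\<in>G. u x * v y * b x y - c * (u x * w y * b x y))"
    unfolding Bf_def by (intro sum.cong refl) (simp add: algebra_simps)
  also have "\<dots> = Bf G b u v - c * Bf G b u w"
    unfolding Bf_def by (simp only: sum_subtractf sum_distrib_left)
  finally show ?thesis .
qed

lemma Bf_skew:
  assumes "\<forall>x\<in>G. \<forall>y\<in>G. b x y = - b y x"
  shows "Bf G b u v = - Bf G b v u"
proof -
  have "Bf G b v u = (\<Sum>y\<in>G. \<Sum>x\<in>G. v y * u x * b y x)" unfolding Bf_def ..
  also have "\<dots> = (\<Sum>x\<in>G. \<Sum>y\<in>G. v y * u x * b y x)" by (rule sum.swap)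
  also have "\<dots> = (\<Sum>x\<in>G. \<Sum>y\<in>G. - (u x * v y * b x y))"
  proof (intro sum.cong refl)
    fix x y assume "x \<in> G" "y \<in> G"
    then have "b y x = - b x y" using assms by blast
    then show "v y * u x * b y x = - (u x * v y * b x y)" by (simp add: algebra_simps)
  qed
  also have "\<dots> = - Bf G b u v" unfolding Bf_def by (simp add: sum_negf)
  finally show ?thesis by simp
qed

lemma Bf_alt_aux:
  assumes skew: "\<forall>x\<in>G0. \<forall>y\<in>G0. b x y = - b y x" and diag: "\<forall>x\<in>G0. b x x = 0"
  shows "finite H \<Longrightarrow> H \<subseteq> G0 \<Longrightarrow> Bf H b u u = 0"
proof (induction H rule: finite_induct)
  case empty
  then show ?case by (simp add: Bf_def)
next
  case (insert a H)
  have aG: "a \<in> G0" and HG: "H \<subseteq> G0" using insert by auto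
  have "Bf (insert a H) b u u = u a * u a * b a a + (\<Sum>y\<in>H. u a * u y * b a y)
      + (\<Sum>x\<in>H. u x * u a * b x a) + Bf H b u u"
    unfolding Bf_def using insert(1,2) by (simp add: sum.distrib algebra_simps)
  also have "(\<Sum>x\<in>H. u x * u a * b x a) = - (\<Sum>y\<in>H. u a * u y * b a y)"
    unfolding sum_negf[symmetric]
  proof (intro sum.cong refl)
    fix x assume "x \<in> H"
    then have "b x a = - b a x" using skew aG HG by blast
    then show "u x * u a * b x a = - (u a * u x * b a x)" by (simp add: algebra_simps)
  qed
  finally show ?case using insert(3)[OF HG] diag aG by simp
qed

lemma Bf_alt:
  assumes "finite G" "\<forall>x\<in>G. \<forall>y\<in>G. b x y = - b y x" "\<forall>x\<in>G. b x x = 0"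
  shows "Bf G b u u = 0"
  using Bf_alt_aux[OF assms(2,3) assms(1)] by simp

lemma transfer:
  fixes b :: "'a \<Rightarrow> 'a \<Rightarrow> 'r::idom" and p :: "nat \<Rightarrow> nat \<Rightarrow> 'r" and c :: "nat \<Rightarrow> 'r"
  assumes fin: "finite G" and skew: "\<forall>x\<in>G. \<forall>y\<in>G. b x y = - b y x" and diag: "\<forall>x\<in>G. b x x = 0"
    and Zs: "\<forall>k<n. Zs!k \<subseteq> G" and Ws: "\<forall>i<m. Ws!i \<subseteq> G"
    and hyp: "\<forall>i<m. \<forall>x. ind (Ws!i) x = (\<Sum>k<n. p i k * ind (Zs!k) x) + c i * u x"
    and hu: "\<forall>i<m. Bf G b u (\<lambda>x. \<Sum>k<n. p i k * ind (Zs!k) x) = 0"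
  shows "mat m m (\<lambda>(i,j). bsum b (Ws!i) (Ws!j)) =
    mat m n (\<lambda>(i,k). p i k) * mat n n (\<lambda>(k,l). bsum b (Zs!k) (Zs!l)) * transpose_mat (mat m n (\<lambda>(i,k). p i k))"
proof (rule eq_matI)
  fix i j assume i': "i < dim_row (mat m n (\<lambda>(i,k). p i k) * mat n n (\<lambda>(k,l). bsum b (Zs!k) (Zs!l)) * transpose_mat (mat m n (\<lambda>(i,k). p i k)))"
    and j': "j < dim_col (mat m n (\<lambda>(i,k). p i k) * mat n n (\<lambda>(k,l). bsum b (Zs!k) (Zs!l)) * transpose_mat (mat m n (\<lambda>(i,k). p i k)))"
  then have i: "i < m" and j: "j < m" by auto
  define w where "w = (\<lambda>i x. \<Sum>k<n. p i k * ind (Zs!k) x)"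
  have wi: "ind (Ws!i) = (\<lambda>x. w i x + c i * u x)" using hyp i unfolding w_def by auto
  have wj: "ind (Ws!j) = (\<lambda>x. w j x + c j * u x)" using hyp j unfolding w_def by auto
  have h1: "Bf G b u (w j) = 0" using hu j unfolding w_def by auto
  have h2: "Bf G b (w i) u = 0" using Bf_skew[OF skew, of "w i" u] hu i unfolding w_def by auto
  have h3: "Bf G b u u = 0" by (rule Bf_alt[OF fin skew diag])
  have "bsum b (Ws!i) (Ws!j) = Bf G b (ind (Ws!i)) (ind (Ws!j))"
    using Bf_ind[OF fin] Ws i j by metis
  also have "\<dots> = Bf G b (w i) (w j)"
    unfolding wi wj Bf_add h1 h2 h3 by simp
  also have "\<dots> = (\<Sum>k<n. \<Sum>l<n. p i k * p j l * Bf G b (ind (Zs!k)) (ind (Zs!l)))"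
    unfolding w_def by (rule Bf_lin)
  also have "\<dots> = (\<Sum>k<n. \<Sum>l<n. p i k * p j l * bsum b (Zs!k) (Zs!l))"
  proof (intro sum.cong refl)
    fix k l assume "k \<in> {..<n}" "l \<in> {..<n}"
    then have "Zs!k \<subseteq> G" "Zs!l \<subseteq> G" using Zs by auto
    then show "p i k * p j l * Bf G b (ind (Zs!k)) (ind (Zs!l)) = p i k * p j l * bsum b (Zs!k) (Zs!l)"
      by (simp add: Bf_ind[OF fin])
  qed
  also have "\<dots> = (\<Sum>l<n. (\<Sum>k<n. p i k * bsum b (Zs!k) (Zs!l)) * p j l)"
    by (subst sum.swap) (simp add: sum_distrib_right sum_distrib_left mult_ac)
  also have "\<dots> = (mat m n (\<lambda>(i,k). p i k) * mat n n (\<lambda>(k,l). bsum b (Zs!k) (Zs!l)) * transpose_mat (mat m n (\<lambda>(i,k). p i k))) $$ (i, j)"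
    using i j by (simp add: scalar_prod_def lessThan_atLeast0)
  finally show "mat m m (\<lambda>(i,j). bsum b (Ws!i) (Ws!j)) $$ (i, j) = (mat m n (\<lambda>(i,k). p i k) * mat n n (\<lambda>(k,l). bsum b (Zs!k) (Zs!l)) * transpose_mat (mat m n (\<lambda>(i,k). p i k))) $$ (i, j)"
    using i j by simp
qed auto

lemma filling_exists:
  assumes "based_matrix T"
  shows "\<exists>Xs. is_filling T Xs"
proof -
  obtain G s b where T: "T = (G, s, b)" by (cases T) auto
  have fin: "finite G" and sG: "s \<in> G" using assms unfolding T based_matrix_def by auto
  obtain xs where xs: "set xs = G" "distinct xs" using finite_distinct_list[OF fin] by blast
  let ?Xs = "map (\<lambda>x. {x}) xs"
  have d1: "\<forall>i<length ?Xs. \<forall>j<length ?Xs. i \<noteq> j \<longrightarrow> ?Xs ! i \<inter> ?Xs ! j = {}"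
  proof (intro allI impI)
    fix i j assume "i < length ?Xs" "j < length ?Xs" "i \<noteq> j"
    then have "xs ! i \<noteq> xs ! j" using xs(2) by (simp add: nth_eq_iff_index_eq)
    then show "?Xs ! i \<inter> ?Xs ! j = {}" using \<open>i < length ?Xs\<close> \<open>j < length ?Xs\<close> by simp
  qed
  have d2: "\<Union> (set ?Xs) = G" using xs(1) by auto
  have d3: "\<forall>X\<in>set ?Xs. finite X \<and> card X \<le> 2" by auto
  have d4: "{s} \<in> set ?Xs" using xs(1) sG by auto
  have "is_filling T ?Xs" unfolding T is_filling_def prod.case using d1 d2 d3 d4 by blast
  then show ?thesis by blast
qed

lemma sigma_nonneg: "filling_sigma T Xs \<ge> 0"
  unfolding filling_sigma_def by simp

lemma genus_le:
  assumes ne: "\<exists>Xs. is_filling T Xs"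
    and ex: "\<And>Xs. is_filling T Xs \<Longrightarrow> \<exists>Ys. is_filling T' Ys \<and> filling_sigma T' Ys \<le> filling_sigma T Xs"
  shows "genus T' \<le> genus T"
  unfolding genus_def
proof (rule cInf_mono)
  show "{filling_sigma T Xs |Xs. is_filling T Xs} \<noteq> {}" using ne by blast
  show "bdd_below {filling_sigma T' Xs |Xs. is_filling T' Xs}"
  proof (rule bdd_belowI[of _ 0])
    fix x assume "x \<in> {filling_sigma T' Xs |Xs. is_filling T' Xs}"
    then obtain Xs where "x = filling_sigma T' Xs" by blast
    then show "0 \<le> x" by (simp add: sigma_nonneg)
  qed
  fix y assume "y \<in> {filling_sigma T Xs |Xs. is_filling T Xs}"
  then obtain Xs where "y = filling_sigma T Xs" "is_filling T Xs" by blast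
  then show "\<exists>a\<in>{filling_sigma T' Xs |Xs. is_filling T' Xs}. a \<le> y" using ex by blast
qed

lemma filling_matrix_carrier: "filling_matrix T Xs \<in> carrier_mat (length Xs) (length Xs)"
  unfolding filling_matrix_def by (cases T) auto

lemma sigma_le:
  assumes P: "P \<in> carrier_mat (length Ys) (length Xs)"
    and eq: "filling_matrix T' Ys = P * filling_matrix T Xs * transpose_mat P"
  shows "filling_sigma T' Ys \<le> filling_sigma T Xs"
proof -
  have "minor_rank (filling_matrix T' Ys) \<le> minor_rank (filling_matrix T Xs)"
    unfolding eq by (rule minor_rank_mult_le[OF P filling_matrix_carrier], use P in auto)
  then show ?thesis unfolding filling_sigma_def by simp
qed

lemma filling_sub:
  assumes "is_filling (G, s, b) Xs" "i < length Xs"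
  shows "Xs ! i \<subseteq> G"
proof -
  have "Xs ! i \<in> set Xs" using assms(2) by (rule nth_mem)
  moreover have "\<Union> (set Xs) = G" using assms(1) unfolding is_filling_def by simp
  ultimately show ?thesis by blast
qed

lemma filling_s:
  assumes "is_filling (G, s, b) Xs"
  obtains si where "si < length Xs" "Xs ! si = {s}"
proof -
  have "{s} \<in> set Xs" using assms unfolding is_filling_def by simp
  then show ?thesis using that by (metis in_set_conv_nth)
qed

lemma filling_cover:
  assumes "is_filling (G, s, b) Xs" "x \<in> G"
  obtains i where "i < length Xs" "x \<in> Xs ! i"
proof -
  have "\<Union> (set Xs) = G" using assms(1) unfolding is_filling_def by simp
  then obtain X where "X \<in> set Xs" "x \<in> X" using assms(2) by blast
  then show ?thesis using that by (metis in_set_conv_nth)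
qed

lemma filling_disj:
  assumes "is_filling (G, s, b) Xs" "i < length Xs" "j < length Xs" "i \<noteq> j"
  shows "Xs ! i \<inter> Xs ! j = {}"
proof -
  have "\<forall>i<length Xs. \<forall>j<length Xs. i \<noteq> j \<longrightarrow> Xs ! i \<inter> Xs ! j = {}"
    using assms(1) unfolding is_filling_def by simp
  then show ?thesis using assms(2-4) by blast
qed

lemma filling_card:
  assumes "is_filling (G, s, b) Xs" "i < length Xs"
  shows "finite (Xs ! i)" "card (Xs ! i) \<le> 2"
proof -
  have "Xs ! i \<in> set Xs" using assms(2) by (rule nth_mem)
  moreover have "\<forall>X\<in>set Xs. finite X \<and> card X \<le> 2" using assms(1) unfolding is_filling_def by simp
  ultimately show "finite (Xs ! i)" "card (Xs ! i) \<le> 2" by auto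
qed

lemma iso_le:
  assumes iso: "bm_iso T T'"
  shows "genus T' \<le> genus T"
proof -
  obtain G s b where T: "T = (G, s, b)" by (cases T) auto
  obtain G' s' b' where T': "T' = (G', s', b')" by (cases T') auto
  from iso obtain f where bmT: "based_matrix T" and f: "bij_betw f G G'" "f s = s'"
      "\<forall>x\<in>G. \<forall>y\<in>G. b' (f x) (f y) = b x y"
    unfolding bm_iso_def T T' by auto
  have inj: "inj_on f G" and im: "f ` G = G'" using f(1) by (auto simp: bij_betw_def)
  show ?thesis
  proof (rule genus_le[OF filling_exists[OF bmT]])
    fix Xs assume Xs: "is_filling T Xs"
    let ?Ys = "map ((`) f) Xs"
    have XsT: "is_filling (G, s, b) Xs" using Xs unfolding T .
    have sub: "Xs ! i \<subseteq> G" if "i < length Xs" for i using filling_sub[OF XsT that] .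
    have d1: "\<forall>i<length ?Ys. \<forall>j<length ?Ys. i \<noteq> j \<longrightarrow> ?Ys ! i \<inter> ?Ys ! j = {}"
    proof (intro allI impI)
      fix i j assume i: "i < length ?Ys" and j: "j < length ?Ys" and ij: "i \<noteq> j"
      have "f ` (Xs ! i) \<inter> f ` (Xs ! j) = f ` (Xs ! i \<inter> Xs ! j)"
        using inj_on_image_Int[OF inj sub sub] i j by simp
      also have "\<dots> = {}" using filling_disj[OF XsT] i j ij by simp
      finally show "?Ys ! i \<inter> ?Ys ! j = {}" using i j by simp
    qed
    have d2: "\<Union> (set ?Ys) = G'"
    proof -
      have "\<Union> (set Xs) = G" using XsT unfolding is_filling_def by simp
      then show ?thesis using im by auto
    qed
    have d3: "\<forall>X\<in>set ?Ys. finite X \<and> card X \<le> 2"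
    proof
      fix X assume "X \<in> set ?Ys"
      then obtain Y where Y: "Y \<in> set Xs" "X = f ` Y" by auto
      have "finite Y" "card Y \<le> 2" using XsT Y(1) unfolding is_filling_def by simp_all
      then show "finite X \<and> card X \<le> 2" using Y(2) card_image_le[of Y f] by auto
    qed
    have d4: "{s'} \<in> set ?Ys"
    proof -
      have "{s} \<in> set Xs" using XsT unfolding is_filling_def by simp
      then show ?thesis using f(2) by force
    qed
    have Ys: "is_filling T' ?Ys"
      unfolding T' is_filling_def prod.case using d1 d2 d3 d4 by blast
    have "filling_matrix T' ?Ys = filling_matrix T Xs"
      unfolding T T' filling_matrix_def prod.case
    proof (rule eq_matI)
      fix i j assume i: "i < dim_row (mat (length Xs) (length Xs) (\<lambda>(i, j). bsum b (Xs ! i) (Xs ! j)))"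
        and j: "j < dim_col (mat (length Xs) (length Xs) (\<lambda>(i, j). bsum b (Xs ! i) (Xs ! j)))"
      then have i: "i < length Xs" and j: "j < length Xs" by auto
      have si: "Xs ! i \<subseteq> G" and sj: "Xs ! j \<subseteq> G" using sub i j by auto
      have "bsum b' (f ` (Xs ! i)) (f ` (Xs ! j)) = bsum b (Xs ! i) (Xs ! j)"
      proof -
        have ii: "inj_on f (Xs ! i)" "inj_on f (Xs ! j)"
          using inj_on_subset[OF inj si] inj_on_subset[OF inj sj] by auto
        have "bsum b' (f ` (Xs ! i)) (f ` (Xs ! j)) = (\<Sum>x\<in>Xs ! i. \<Sum>y\<in>f ` (Xs ! j). b' (f x) y)"
          unfolding bsum_def by (simp add: sum.reindex[OF ii(1)])
        also have "\<dots> = (\<Sum>x\<in>Xs ! i. \<Sum>y\<in>Xs ! j. b' (f x) (f y))"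
          by (rule sum.cong[OF refl]) (simp add: sum.reindex[OF ii(2)])
        also have "\<dots> = bsum b (Xs ! i) (Xs ! j)"
          unfolding bsum_def
        proof (intro sum.cong refl)
          fix x y assume "x \<in> Xs ! i" "y \<in> Xs ! j"
          then have "x \<in> G" "y \<in> G" using si sj by auto
          then show "b' (f x) (f y) = b x y" using f(3) by blast
        qed
        finally show ?thesis .
      qed
      then show "mat (length ?Ys) (length ?Ys) (\<lambda>(i, j). bsum b' (?Ys ! i) (?Ys ! j)) $$ (i, j) =
        mat (length Xs) (length Xs) (\<lambda>(i, j). bsum b (Xs ! i) (Xs ! j)) $$ (i, j)"
        using i j by simp
    qed auto
    then have "filling_sigma T' ?Ys = filling_sigma T Xs" unfolding filling_sigma_def by simp
    then show "\<exists>Ys. is_filling T' Ys \<and> filling_sigma T' Ys \<le> filling_sigma T Xs" using Ys by auto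
  qed
qed

lemma iso_sym:
  assumes iso: "bm_iso T T'"
  shows "bm_iso T' T"
proof -
  obtain G s b where T: "T = (G, s, b)" by (cases T) auto
  obtain G' s' b' where T': "T' = (G', s', b')" by (cases T') auto
  from iso obtain f where bm: "based_matrix T" "based_matrix T'" and f: "bij_betw f G G'" "f s = s'"
      "\<forall>x\<in>G. \<forall>y\<in>G. b' (f x) (f y) = b x y"
    unfolding bm_iso_def T T' by auto
  have sG: "s \<in> G" using bm(1) unfolding T based_matrix_def by auto
  let ?g = "inv_into G f"
  have g: "bij_betw ?g G' G" by (rule bij_betw_inv_into[OF f(1)])
  have gs: "?g s' = s" using bij_betw_inv_into_left[OF f(1) sG] f(2) by simp
  have gb: "\<forall>x\<in>G'. \<forall>y\<in>G'. b (?g x) (?g y) = b' x y"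
  proof (intro ballI)
    fix x y assume x: "x \<in> G'" and y: "y \<in> G'"
    have "?g x \<in> G" "?g y \<in> G" using g x y by (auto simp: bij_betw_def)
    then have "b (?g x) (?g y) = b' (f (?g x)) (f (?g y))" using f(3) by simp
    also have "\<dots> = b' x y" using f(1) x y by (simp add: bij_betw_inv_into_right)
    finally show "b (?g x) (?g y) = b' x y" .
  qed
  show ?thesis unfolding bm_iso_def T T' prod.case
    by (intro conjI exI[of _ ?g]) (use bm g gs gb in \<open>simp_all add: T T'\<close>)
qed

lemma sum_delta_mult:
  assumes "finite S"
  shows "(\<Sum>k\<in>S. (if k = a then c else 0) * f k) = (if a \<in> S then c * f a else (0::'r::comm_ring_1))"
proof -
  have eq: "(\<lambda>k. (if k = a then c else 0) * f k) = (\<lambda>k. if k = a then c * f a else 0)" by (rule HOL.ext) simp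
  show ?thesis unfolding eq using sum.delta[OF assms, of a "\<lambda>_. c * f a"] by simp
qed

lemma sum3:
  assumes "finite S"
  shows "(\<Sum>k\<in>S. ((if k = a then x1 else 0) + (if k = a2 then x2 else 0) - (if k = a3 then x3 else 0)) * f k) =
    (if a \<in> S then x1 * f a else 0) + (if a2 \<in> S then x2 * f a2 else 0) - (if a3 \<in> S then x3 * f a3 else (0::'r::comm_ring_1))"
proof -
  have "(\<Sum>k\<in>S. ((if k = a then x1 else 0) + (if k = a2 then x2 else 0) - (if k = a3 then x3 else 0)) * f k) =
    (\<Sum>k\<in>S. (if k = a then x1 else 0) * f k) + (\<Sum>k\<in>S. (if k = a2 then x2 else 0) * f k) - (\<Sum>k\<in>S. (if k = a3 then x3 else 0) * f k)"
    by (simp only: ring_distribs sum.distrib sum_subtractf)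
  then show ?thesis by (simp only: sum_delta_mult[OF assms])
qed

lemma u_orth:
  fixes b b' :: "'a \<Rightarrow> 'a \<Rightarrow> 'r::idom"
  assumes fin: "finite G'" and sG: "s \<in> G" and GG': "G \<subseteq> G'" and ZG': "Z \<subseteq> G'" and W: "W \<subseteq> G"
    and agree: "\<forall>x\<in>G. \<forall>y\<in>G. b' x y = b x y"
    and zs: "\<forall>y\<in>G. (\<Sum>x\<in>Z. b' x y) = d * b s y"
  shows "Bf G' b' (\<lambda>x. ind Z x - d * ind {s} x) (ind W) = 0"
proof -
  have WG': "W \<subseteq> G'" and sG': "{s} \<subseteq> G'" using W GG' sG by auto
  have finZ: "finite Z" using fin ZG' finite_subset by blast
  have "Bf G' b' (\<lambda>x. ind Z x - d * ind {s} x) (ind W) = Bf G' b' (ind Z) (ind W) - d * Bf G' b' (ind {s}) (ind W)"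
    by (rule Bf_diff1)
  also have "\<dots> = bsum b' Z W - d * bsum b' {s} W"
    by (subst Bf_ind[OF fin ZG' WG'], subst Bf_ind[OF fin sG' WG'], rule refl)
  also have "bsum b' Z W = (\<Sum>y\<in>W. d * b s y)"
  proof -
    have "bsum b' Z W = (\<Sum>y\<in>W. \<Sum>x\<in>Z. b' x y)" unfolding bsum_def by (rule sum.swap)
    also have "\<dots> = (\<Sum>y\<in>W. d * b s y)"
    proof (rule sum.cong[OF refl])
      fix y assume "y \<in> W" then have "y \<in> G" using W by auto
      then show "(\<Sum>x\<in>Z. b' x y) = d * b s y" using zs by blast
    qed
    finally show ?thesis .
  qed
  also have "bsum b' {s} W = (\<Sum>y\<in>W. b s y)"
    unfolding bsum_def
  proof (simp, rule sum.cong[OF refl])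
    fix y assume "y \<in> W" then have "y \<in> G" using W by auto
    then show "b' s y = b s y" using agree sG by blast
  qed
  finally show ?thesis by (simp add: sum_distrib_left)
qed

lemma fm_agree:
  fixes b b' :: "'a \<Rightarrow> 'a \<Rightarrow> 'r::idom"
  assumes sub: "\<forall>i<length Xs. Xs ! i \<subseteq> G" and agree: "\<forall>x\<in>G. \<forall>y\<in>G. b' x y = b x y"
  shows "filling_matrix (G, s, b) Xs = mat (length Xs) (length Xs) (\<lambda>(i,j). bsum b' (Xs!i) (Xs!j))"
  unfolding filling_matrix_def prod.case
proof (rule eq_matI)
  fix i j assume "i < dim_row (mat (length Xs) (length Xs) (\<lambda>(i,j). bsum b' (Xs!i) (Xs!j)))"
    "j < dim_col (mat (length Xs) (length Xs) (\<lambda>(i,j). bsum b' (Xs!i) (Xs!j)))"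
  then have i: "i < length Xs" and j: "j < length Xs" by auto
  have "bsum b (Xs!i) (Xs!j) = bsum b' (Xs!i) (Xs!j)"
    unfolding bsum_def
  proof (intro sum.cong refl)
    fix x y assume "x \<in> Xs ! i" "y \<in> Xs ! j"
    then have "x \<in> G" "y \<in> G" using sub i j by auto
    then show "b x y = b' x y" using agree by simp
  qed
  then show "mat (length Xs) (length Xs) (\<lambda>(i, j). bsum b (Xs ! i) (Xs ! j)) $$ (i, j) =
         mat (length Xs) (length Xs) (\<lambda>(i, j). bsum b' (Xs ! i) (Xs ! j)) $$ (i, j)" using i j by simp
qed auto

lemma fm_def': "filling_matrix (G, s, b) Xs = mat (length Xs) (length Xs) (\<lambda>(i,j). bsum b (Xs!i) (Xs!j))"
  unfolding filling_matrix_def by simp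

lemma core:
  fixes b' :: "'a \<Rightarrow> 'a \<Rightarrow> 'r::idom"
  assumes fin: "finite G'" and skew: "\<forall>x\<in>G'. \<forall>y\<in>G'. b' x y = - b' y x" and diag: "\<forall>x\<in>G'. b' x x = 0"
    and Zs: "\<forall>k<length Zs. Zs!k \<subseteq> G'" and Ws: "\<forall>i<length Ws. Ws!i \<subseteq> G'"
    and hyp: "\<forall>i<length Ws. \<forall>x. ind (Ws!i) x = (\<Sum>k<length Zs. p i k * ind (Zs!k) x) + c i * u x"
    and hu: "\<forall>i<length Ws. Bf G' b' u (\<lambda>x. \<Sum>k<length Zs. p i k * ind (Zs!k) x) = 0"
    and FW: "filling_matrix TW Ws = mat (length Ws) (length Ws) (\<lambda>(i,j). bsum b' (Ws!i) (Ws!j))"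
    and FZ: "filling_matrix TZ Zs = mat (length Zs) (length Zs) (\<lambda>(i,j). bsum b' (Zs!i) (Zs!j))"
  shows "filling_sigma TW Ws \<le> filling_sigma TZ Zs"
proof (rule sigma_le)
  show "mat (length Ws) (length Zs) (\<lambda>(i,k). p i k) \<in> carrier_mat (length Ws) (length Zs)" by simp
  show "filling_matrix TW Ws = mat (length Ws) (length Zs) (\<lambda>(i,k). p i k) * filling_matrix TZ Zs *
     transpose_mat (mat (length Ws) (length Zs) (\<lambda>(i,k). p i k))"
    unfolding FW FZ by (rule transfer[OF fin skew diag Zs Ws hyp hu])
qed

lemma bm_parts:
  assumes "based_matrix (G, s, b)"
  shows "finite G" "s \<in> G" "\<forall>g\<in>G. \<forall>h\<in>G. b g h = - b h g" "\<forall>g\<in>G. b g g = 0"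
proof -
  have "finite G \<and> s \<in> G \<and> (\<forall>g\<in>G. \<forall>h\<in>G. b g h = - b h g) \<and> (\<forall>g\<in>G. b g g = 0)"
    using assms unfolding based_matrix_def prod.case .
  then show "finite G" "s \<in> G" "\<forall>g\<in>G. \<forall>h\<in>G. b g h = - b h g" "\<forall>g\<in>G. b g g = 0"
    by blast+
qed

lemma forward:
  fixes b b' :: "'a \<Rightarrow> 'a \<Rightarrow> 'r::idom"
  assumes bm: "based_matrix (G, s, b)" "based_matrix (G', s, b')"
    and ZG: "Z \<inter> G = {}" and G': "G' = G \<union> Z" and cZ: "card Z \<le> 2"
    and agree: "\<forall>x\<in>G. \<forall>y\<in>G. b' x y = b x y"
    and zs: "\<forall>y\<in>G. (\<Sum>x\<in>Z. b' x y) = d * b s y"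
    and Xs: "is_filling (G, s, b) Xs"
  shows "\<exists>Ys. is_filling (G', s, b') Ys \<and> filling_sigma (G', s, b') Ys \<le> filling_sigma (G, s, b) Xs"
proof -
  have finG': "finite G'" and skew: "\<forall>x\<in>G'. \<forall>y\<in>G'. b' x y = - b' y x" and diag: "\<forall>x\<in>G'. b' x x = 0"
    using bm_parts[OF bm(2)] by blast+
  have sG: "s \<in> G" using bm_parts[OF bm(1)] by blast
  have finZ: "finite Z" using finG' G' by simp
  have GG': "G \<subseteq> G'" and ZG': "Z \<subseteq> G'" using G' by auto
  define n where "n = length Xs"
  obtain si where si: "si < n" "Xs ! si = {s}" using filling_s[OF Xs] unfolding n_def by blast
  have sub: "\<forall>k<n. Xs ! k \<subseteq> G" using filling_sub[OF Xs] unfolding n_def by blast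
  define Ys where "Ys = Xs @ [Z]"
  have lYs: "length Ys = Suc n" unfolding Ys_def n_def by simp
  have Ysn: "\<And>i. i < n \<Longrightarrow> Ys ! i = Xs ! i" unfolding Ys_def n_def by (simp add: nth_append)
  have Ysl: "Ys ! n = Z" unfolding Ys_def n_def by simp
  have setYs: "set Ys = insert Z (set Xs)" unfolding Ys_def by simp
  have d1: "\<forall>i<length Ys. \<forall>j<length Ys. i \<noteq> j \<longrightarrow> Ys ! i \<inter> Ys ! j = {}"
  proof (intro allI impI)
    fix i j assume i: "i < length Ys" and j: "j < length Ys" and ij: "i \<noteq> j"
    show "Ys ! i \<inter> Ys ! j = {}"
    proof (cases "i < n \<and> j < n")
      case True
      then show ?thesis using Ysn filling_disj[OF Xs] ij unfolding n_def by simp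
    next
      case False
      then have "(i = n \<and> j < n) \<or> (j = n \<and> i < n)" using i j ij lYs by auto
      then show ?thesis
      proof
        assume h: "i = n \<and> j < n"
        then have "Xs ! j \<subseteq> G" using sub by blast
        then show ?thesis using h Ysn[of j] Ysl ZG by auto
      next
        assume h: "j = n \<and> i < n"
        then have "Xs ! i \<subseteq> G" using sub by blast
        then show ?thesis using h Ysn[of i] Ysl ZG by auto
      qed
    qed
  qed
  have d2: "\<Union> (set Ys) = G'"
  proof -
    have "\<Union> (set Xs) = G" using Xs unfolding is_filling_def by simp
    then show ?thesis unfolding setYs G' by auto
  qed
  have d3: "\<forall>X\<in>set Ys. finite X \<and> card X \<le> 2"
  proof -
    have "\<forall>X\<in>set Xs. finite X \<and> card X \<le> 2" using Xs unfolding is_filling_def by simp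
    then show ?thesis unfolding setYs using finZ cZ by simp
  qed
  have d4: "{s} \<in> set Ys"
  proof -
    have "{s} \<in> set Xs" using Xs unfolding is_filling_def by simp
    then show ?thesis unfolding setYs by simp
  qed
  have Ysf: "is_filling (G', s, b') Ys" unfolding is_filling_def prod.case using d1 d2 d3 d4 by blast
  define p where "p = (\<lambda>i k. ((if k = i then 1 else 0) + (if k = si then (if i < n then 0 else d) else 0)
      - (if k = si then 0 else 0)) :: 'r)"
  define c where "c = (\<lambda>i. if i < n then 0 else (1::'r))"
  define u where "u = (\<lambda>x. ind Z x - d * ind {s} x)"
  have sumeq: "(\<Sum>k<n. p i k * ind (Xs!k) x) = (if i < n then ind (Xs ! i) x else 0) + (if i < n then 0 else d * ind {s} x)"
    for i x
    unfolding p_def sum3[OF finite_lessThan] using si by simp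
  have hyp: "\<forall>i<length Ys. \<forall>x. ind (Ys!i) x = (\<Sum>k<length Xs. p i k * ind (Xs!k) x) + c i * u x"
  proof (intro allI impI)
    fix i x assume i: "i < length Ys"
    show "ind (Ys!i) x = (\<Sum>k<length Xs. p i k * ind (Xs!k) x) + c i * u x"
    proof (cases "i < n")
      case True
      then show ?thesis unfolding n_def[symmetric] sumeq c_def using Ysn by simp
    next
      case False
      then have "i = n" using i lYs by simp
      then show ?thesis unfolding n_def[symmetric] sumeq c_def u_def using Ysl by simp
    qed
  qed
  have orth: "Bf G' b' u (ind W) = 0" if "W \<subseteq> G" for W
    unfolding u_def by (rule u_orth[OF finG' sG GG' ZG' that agree zs])
  have hu: "\<forall>i<length Ys. Bf G' b' u (\<lambda>x. \<Sum>k<length Xs. p i k * ind (Xs!k) x) = 0"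
  proof (intro allI impI)
    fix i assume "i < length Ys"
    have "Bf G' b' u (\<lambda>x. \<Sum>k<length Xs. p i k * ind (Xs!k) x) = (\<Sum>k<length Xs. p i k * Bf G' b' u (ind (Xs!k)))"
      by (rule Bf_lin2)
    also have "\<dots> = 0"
    proof (rule sum.neutral, rule ballI)
      fix k assume "k \<in> {..<length Xs}"
      then have "Xs ! k \<subseteq> G" using sub unfolding n_def by simp
      then show "p i k * Bf G' b' u (ind (Xs!k)) = 0" using orth by simp
    qed
    finally show "Bf G' b' u (\<lambda>x. \<Sum>k<length Xs. p i k * ind (Xs!k) x) = 0" .
  qed
  have ZsG': "\<forall>k<length Xs. Xs!k \<subseteq> G'" using sub GG' unfolding n_def by blast
  have WsG': "\<forall>i<length Ys. Ys!i \<subseteq> G'"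
  proof (intro allI impI)
    fix i assume "i < length Ys"
    then have "Ys ! i \<in> set Ys" by (rule nth_mem)
    then show "Ys ! i \<subseteq> G'" using d2 by blast
  qed
  have "filling_sigma (G', s, b') Ys \<le> filling_sigma (G, s, b) Xs"
    by (rule core[OF finG' skew diag ZsG' WsG' hyp hu fm_def' fm_agree[OF _ agree]], use sub in \<open>simp add: n_def\<close>)
  then show ?thesis using Ysf by blast
qed

lemma converse_core:
  fixes b b' :: "'a \<Rightarrow> 'a \<Rightarrow> 'r::idom"
  assumes bm: "based_matrix (G, s, b)" "based_matrix (G', s, b')"
    and GG': "G \<subseteq> G'" and ZG': "Z \<subseteq> G'"
    and agree: "\<forall>x\<in>G. \<forall>y\<in>G. b' x y = b x y"
    and zs: "\<forall>y\<in>G. (\<Sum>x\<in>Z. b' x y) = d * b s y"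
    and Ys: "is_filling (G', s, b') Ys"
    and len: "length Xs = length Ys"
    and XsG: "\<forall>i<length Xs. Xs ! i \<subseteq> G"
    and si: "si < length Ys" "Ys ! si = {s}" and a2: "a2 < length Ys"
    and hyp': "\<forall>i<length Ys. \<forall>x. ind (Xs!i) x = ind (Ys!i) x + e2 i * ind (Ys!a2) x
        - (if i = a then d else 0) * ind {s} x + (if i = a then -1 else 0) * (ind Z x - d * ind {s} x)"
  shows "filling_sigma (G, s, b) Xs \<le> filling_sigma (G', s, b') Ys"
proof -
  have finG': "finite G'" and skew: "\<forall>x\<in>G'. \<forall>y\<in>G'. b' x y = - b' y x" and diag: "\<forall>x\<in>G'. b' x x = 0"
    using bm_parts[OF bm(2)] by blast+
  have sG: "s \<in> G" using bm_parts[OF bm(1)] by blast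
  define m where "m = length Ys"
  define p where "p = (\<lambda>i k. ((if k = i then 1 else 0) + (if k = a2 then e2 i else 0)
      - (if k = si then (if i = a then d else 0) else 0)) :: 'r)"
  define c where "c = (\<lambda>i. if i = a then -1 else (0::'r))"
  define u where "u = (\<lambda>x. ind Z x - d * ind {s} x)"
  have sumeq: "(\<Sum>k<m. p i k * ind (Ys!k) x) = ind (Ys ! i) x + e2 i * ind (Ys ! a2) x - (if i = a then d else 0) * ind {s} x"
    if "i < m" for i x
    unfolding p_def sum3[OF finite_lessThan] using si a2 that unfolding m_def by simp
  have hyp: "\<forall>i<length Xs. \<forall>x. ind (Xs!i) x = (\<Sum>k<length Ys. p i k * ind (Ys!k) x) + c i * u x"
  proof (intro allI impI)
    fix i x assume i: "i < length Xs"
    then have im: "i < m" using len unfolding m_def by simp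
    show "ind (Xs!i) x = (\<Sum>k<length Ys. p i k * ind (Ys!k) x) + c i * u x"
      unfolding m_def[symmetric] sumeq[OF im] c_def u_def using hyp' im unfolding m_def by simp
  qed
  have YsG': "\<forall>k<length Ys. Ys!k \<subseteq> G'" using filling_sub[OF Ys] by blast
  have XsG': "\<forall>i<length Xs. Xs!i \<subseteq> G'" using XsG GG' by blast
  have orth: "Bf G' b' u (ind W) = 0" if "W \<subseteq> G" for W
    unfolding u_def by (rule u_orth[OF finG' sG GG' ZG' that agree zs])
  have uu: "Bf G' b' u u = 0" by (rule Bf_alt[OF finG' skew diag])
  have hu: "\<forall>i<length Xs. Bf G' b' u (\<lambda>x. \<Sum>k<length Ys. p i k * ind (Ys!k) x) = 0"
  proof (intro allI impI)
    fix i assume i: "i < length Xs"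
    have eq: "(\<lambda>x. \<Sum>k<length Ys. p i k * ind (Ys!k) x) = (\<lambda>x. ind (Xs!i) x - c i * u x)"
      using hyp i by (intro HOL.ext) simp
    show "Bf G' b' u (\<lambda>x. \<Sum>k<length Ys. p i k * ind (Ys!k) x) = 0"
      unfolding eq Bf_diff2 using orth[OF XsG[rule_format, OF i]] uu by simp
  qed
  show ?thesis
    by (rule core[OF finG' skew diag YsG' XsG' hyp hu fm_agree[OF XsG agree] fm_def'])
qed

lemma in_Union_nth: "i < length Xs \<Longrightarrow> x \<in> Xs ! i \<Longrightarrow> x \<in> \<Union> (set Xs)"
  by (metis UnionI nth_mem)

lemma converse:
  fixes b b' :: "'a \<Rightarrow> 'a \<Rightarrow> 'r::idom"
  assumes bm: "based_matrix (G, s, b)" "based_matrix (G', s, b')"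
    and g1: "g1 \<notin> G" and g2: "g2 \<notin> G" and G': "G' = G \<union> {g1, g2}"
    and agree: "\<forall>x\<in>G. \<forall>y\<in>G. b' x y = b x y"
    and zs: "\<forall>y\<in>G. (\<Sum>x\<in>{g1, g2}. b' x y) = d * b s y"
    and Ys: "is_filling (G', s, b') Ys"
  shows "\<exists>Xs. is_filling (G, s, b) Xs \<and> filling_sigma (G, s, b) Xs \<le> filling_sigma (G', s, b') Ys"
proof -
  define Z where "Z = {g1, g2}"
  have sG: "s \<in> G" using bm_parts[OF bm(1)] by blast
  have GG': "G \<subseteq> G'" and ZG': "Z \<subseteq> G'" using G' unfolding Z_def by auto
  have GZ: "G' - Z = G" using G' g1 g2 unfolding Z_def by auto
  define m where "m = length Ys"
  obtain si where si: "si < m" "Ys ! si = {s}" using filling_s[OF Ys] unfolding m_def by blast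
  obtain a where a: "a < m" "g1 \<in> Ys ! a" using filling_cover[OF Ys, of g1] G' unfolding m_def by blast
  obtain a2 where a2: "a2 < m" "g2 \<in> Ys ! a2" using filling_cover[OF Ys, of g2] G' unfolding m_def by blast
  have disj: "Ys ! i \<inter> Ys ! j = {}" if "i < m" "j < m" "i \<noteq> j" for i j
    using filling_disj[OF Ys] that unfolding m_def by blast
  have YsG': "Ys ! i \<subseteq> G'" if "i < m" for i using filling_sub[OF Ys] that unfolding m_def by blast
  have finY: "finite (Ys ! i)" "card (Ys ! i) \<le> 2" if "i < m" for i
    using filling_card[OF Ys] that unfolding m_def by blast+
  have sa: "si \<noteq> a" using si a g1 sG by auto
  have sa2: "si \<noteq> a2" using si a2 g2 sG by auto
  have g1o: "g1 \<notin> Ys ! i" if "i < m" "i \<noteq> a" for i using disj[OF that(1) a(1) that(2)] a(2) by blast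
  have g2o: "g2 \<notin> Ys ! i" if "i < m" "i \<noteq> a2" for i using disj[OF that(1) a2(1) that(2)] a2(2) by blast
  have YsZ: "Ys ! i \<subseteq> G" if "i < m" "i \<noteq> a" "i \<noteq> a2" for i
    using YsG'[OF that(1)] g1o[OF that(1,2)] g2o[OF that(1,3)] GZ unfolding Z_def by blast
  have Ucov: "\<exists>k<m. x \<in> Ys ! k" if "x \<in> G" for x
    using filling_cover[OF Ys, of x] that GG' unfolding m_def by blast
  show ?thesis
  proof (cases "a = a2")
    case True
    define Xs where "Xs = Ys[a := Ys ! a - Z]"
    have len: "length Xs = m" unfolding Xs_def m_def by simp
    have Xn: "Xs ! i = (if i = a then Ys ! a - Z else Ys ! i)" if "i < m" for i
      unfolding Xs_def using that unfolding m_def by simp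
    have XsG: "\<forall>i<length Xs. Xs ! i \<subseteq> G"
    proof (intro allI impI)
      fix i assume "i < length Xs"
      then have i: "i < m" using len by simp
      show "Xs ! i \<subseteq> G"
      proof (cases "i = a")
        case True then show ?thesis using Xn[OF i] YsG'[OF i] GZ by auto
      next
        case False then show ?thesis using Xn[OF i] YsZ[OF i] \<open>a = a2\<close> by auto
      qed
    qed
    have Xsub: "Xs ! i \<subseteq> Ys ! i" if "i < m" for i using Xn[OF that] by auto
    have f1: "\<forall>i<length Xs. \<forall>j<length Xs. i \<noteq> j \<longrightarrow> Xs ! i \<inter> Xs ! j = {}"
    proof (intro allI impI)
      fix i j assume "i < length Xs" "j < length Xs" "i \<noteq> j"
      then show "Xs ! i \<inter> Xs ! j = {}" using disj[of i j] Xsub[of i] Xsub[of j] len by auto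
    qed
    have f2: "\<Union> (set Xs) = G"
    proof
      show "\<Union> (set Xs) \<subseteq> G"
      proof (rule Union_least)
        fix X assume "X \<in> set Xs"
        then obtain i where "i < length Xs" "X = Xs ! i" by (auto simp: in_set_conv_nth)
        then show "X \<subseteq> G" using XsG by blast
      qed
      show "G \<subseteq> \<Union> (set Xs)"
      proof
        fix x assume x: "x \<in> G"
        then obtain k where k: "k < m" "x \<in> Ys ! k" using Ucov by blast
        have "x \<notin> Z" using x GZ by auto
        then have "x \<in> Xs ! k" using Xn[OF k(1)] k(2) by auto
        then show "x \<in> \<Union> (set Xs)" using k(1) len by (intro in_Union_nth[of k]) simp_all
      qed
    qed
    have f3: "\<forall>X\<in>set Xs. finite X \<and> card X \<le> 2"
    proof
      fix X assume "X \<in> set Xs"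
      then obtain i where i: "i < m" "X = Xs ! i" using len by (auto simp: in_set_conv_nth)
      have "finite X" using finite_subset[OF Xsub[OF i(1)] finY(1)[OF i(1)]] i(2) by simp
      moreover have "card X \<le> 2" using card_mono[OF finY(1)[OF i(1)] Xsub[OF i(1)]] finY(2)[OF i(1)] i(2) by simp
      ultimately show "finite X \<and> card X \<le> 2" by simp
    qed
    have f4: "{s} \<in> set Xs"
    proof -
      have "Xs ! si = {s}" using Xn[OF si(1)] sa si(2) by simp
      then show ?thesis using si(1) len by (metis nth_mem)
    qed
    have Xsf: "is_filling (G, s, b) Xs" unfolding is_filling_def prod.case using f1 f2 f3 f4 by blast
    have hyp': "\<forall>i<length Ys. \<forall>x. ind (Xs!i) x = ind (Ys!i) x + (\<lambda>_. 0) i * ind (Ys!a2) x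
        - (if i = a then d else 0) * ind {s} x + (if i = a then -1 else 0) * (ind Z x - d * ind {s} x)"
    proof (intro allI impI)
      fix i x assume "i < length Ys"
      then have i: "i < m" unfolding m_def .
      have Za: "Z \<subseteq> Ys ! a" using a(2) a2(2) \<open>a = a2\<close> unfolding Z_def by auto
      show "ind (Xs!i) x = ind (Ys!i) x + (\<lambda>_. 0) i * ind (Ys!a2) x
        - (if i = a then d else 0) * ind {s} x + (if i = a then -1 else 0) * (ind Z x - d * ind {s} x)"
      proof (cases "i = a")
        case True
        then show ?thesis using Xn[OF i] Za by (auto simp: ind_def)
      next
        case False
        then show ?thesis using Xn[OF i] by simp
      qed
    qed
    have "filling_sigma (G, s, b) Xs \<le> filling_sigma (G', s, b') Ys"
      by (rule converse_core[OF bm GG' ZG' agree zs[folded Z_def] Ys _ XsG si[unfolded m_def] a2(1)[unfolded m_def] hyp'],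
          use len m_def in simp)
    then show ?thesis using Xsf by blast
  next
    case False
    define Xs where "Xs = Ys[a := (Ys ! a \<union> Ys ! a2) - Z, a2 := {}]"
    have len: "length Xs = m" unfolding Xs_def m_def by simp
    have Xn: "Xs ! i = (if i = a2 then {} else if i = a then (Ys ! a \<union> Ys ! a2) - Z else Ys ! i)" if "i < m" for i
      unfolding Xs_def using that False unfolding m_def by simp
    have XsG: "\<forall>i<length Xs. Xs ! i \<subseteq> G"
    proof (intro allI impI)
      fix i assume "i < length Xs"
      then have i: "i < m" using len by simp
      show "Xs ! i \<subseteq> G"
      proof (cases "i = a2 \<or> i = a")
        case True then show ?thesis using Xn[OF i] YsG'[OF a(1)] YsG'[OF a2(1)] GZ by auto
      next
        case False then show ?thesis using Xn[OF i] YsZ[OF i] by auto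
      qed
    qed
    have f1: "\<forall>i<length Xs. \<forall>j<length Xs. i \<noteq> j \<longrightarrow> Xs ! i \<inter> Xs ! j = {}"
    proof (intro allI impI)
      fix i j assume ij: "i < length Xs" "j < length Xs" "i \<noteq> j"
      then have i: "i < m" and j: "j < m" using len by auto
      show "Xs ! i \<inter> Xs ! j = {}"
      proof (cases "i = a2 \<or> j = a2")
        case True then show ?thesis using Xn[OF i] Xn[OF j] by auto
      next
        case nf: False
        show ?thesis
        proof (cases "i = a")
          case True
          then have "j \<noteq> a" using ij by simp
          then show ?thesis using Xn[OF i] Xn[OF j] True nf disj[OF a(1) j] disj[OF a2(1) j] by auto
        next
          case nia: False
          show ?thesis
          proof (cases "j = a")
            case True
            then show ?thesis using Xn[OF i] Xn[OF j] nia nf disj[OF i a(1)] disj[OF i a2(1)] by auto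
          next
            case False
            then show ?thesis using Xn[OF i] Xn[OF j] nia nf disj[OF i j ij(3)] by auto
          qed
        qed
      qed
    qed
    have f2: "\<Union> (set Xs) = G"
    proof
      show "\<Union> (set Xs) \<subseteq> G"
      proof (rule Union_least)
        fix X assume "X \<in> set Xs"
        then obtain i where "i < length Xs" "X = Xs ! i" by (auto simp: in_set_conv_nth)
        then show "X \<subseteq> G" using XsG by blast
      qed
      show "G \<subseteq> \<Union> (set Xs)"
      proof
        fix x assume x: "x \<in> G"
        then obtain k where k: "k < m" "x \<in> Ys ! k" using Ucov by blast
        have xZ: "x \<notin> Z" using x GZ by auto
        show "x \<in> \<Union> (set Xs)"
        proof (cases "k = a \<or> k = a2")
          case True
          then have "x \<in> Xs ! a" using Xn[OF a(1)] False k(2) xZ by auto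
          then show ?thesis using a(1) len by (intro in_Union_nth[of a]) simp_all
        next
          case nk: False
          then have "x \<in> Xs ! k" using Xn[OF k(1)] k(2) by auto
          then show ?thesis using k(1) len by (intro in_Union_nth[of k]) simp_all
        qed
      qed
    qed
    have f3: "\<forall>X\<in>set Xs. finite X \<and> card X \<le> 2"
    proof
      fix X assume "X \<in> set Xs"
      then obtain i where i: "i < m" "X = Xs ! i" using len by (auto simp: in_set_conv_nth)
      show "finite X \<and> card X \<le> 2"
      proof (cases "i = a2")
        case True then show ?thesis using Xn[OF i(1)] i(2) by simp
      next
        case nia2: False
        show ?thesis
        proof (cases "i = a")
          case True
          have sub: "X \<subseteq> (Ys ! a - {g1}) \<union> (Ys ! a2 - {g2})"
            using Xn[OF i(1)] i(2) True nia2 unfolding Z_def by auto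
          have fa: "finite (Ys ! a - {g1})" "finite (Ys ! a2 - {g2})" using finY(1)[OF a(1)] finY(1)[OF a2(1)] by auto
          have c1: "card (Ys ! a - {g1}) \<le> 1" using card_Diff_singleton[OF a(2)] finY[OF a(1)] by simp
          have c2: "card (Ys ! a2 - {g2}) \<le> 1" using card_Diff_singleton[OF a2(2)] finY[OF a2(1)] by simp
          have "card X \<le> card ((Ys ! a - {g1}) \<union> (Ys ! a2 - {g2}))" using card_mono[OF _ sub] fa by simp
          also have "\<dots> \<le> card (Ys ! a - {g1}) + card (Ys ! a2 - {g2})" by (rule card_Un_le)
          finally have "card X \<le> 2" using c1 c2 by simp
          moreover have "finite X" using finite_subset[OF sub] fa by simp
          ultimately show ?thesis by simp
        next
          case False
          then have "X = Ys ! i" using Xn[OF i(1)] i(2) nia2 by simp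
          then show ?thesis using finY[OF i(1)] by simp
        qed
      qed
    qed
    have f4: "{s} \<in> set Xs"
    proof -
      have "Xs ! si = {s}" using Xn[OF si(1)] sa sa2 si(2) by simp
      then show ?thesis using si(1) len by (metis nth_mem)
    qed
    have Xsf: "is_filling (G, s, b) Xs" unfolding is_filling_def prod.case using f1 f2 f3 f4 by blast
    define e2 where "e2 = (\<lambda>i. if i = a then 1 else if i = a2 then -1 else (0::'r))"
    have hyp': "\<forall>i<length Ys. \<forall>x. ind (Xs!i) x = ind (Ys!i) x + e2 i * ind (Ys!a2) x
        - (if i = a then d else 0) * ind {s} x + (if i = a then -1 else 0) * (ind Z x - d * ind {s} x)"
    proof (intro allI impI)
      fix i x assume "i < length Ys"
      then have i: "i < m" unfolding m_def .
      have dd: "Ys ! a \<inter> Ys ! a2 = {}" using disj[OF a(1) a2(1) False] .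
      show "ind (Xs!i) x = ind (Ys!i) x + e2 i * ind (Ys!a2) x
        - (if i = a then d else 0) * ind {s} x + (if i = a then -1 else 0) * (ind Z x - d * ind {s} x)"
      proof (cases "i = a")
        case True
        have "ind (Xs!i) x = ind (Ys!a) x + ind (Ys!a2) x - ind Z x"
          using Xn[OF i] True False dd a(2) a2(2) unfolding Z_def by (auto simp: ind_def)
        then show ?thesis using True unfolding e2_def by (simp add: algebra_simps)
      next
        case nia: False
        show ?thesis
        proof (cases "i = a2")
          case True
          then show ?thesis using Xn[OF i] nia unfolding e2_def by (simp add: ind_def)
        next
          case False
          then show ?thesis using Xn[OF i] nia unfolding e2_def by simp
        qed
      qed
    qed
    have "filling_sigma (G, s, b) Xs \<le> filling_sigma (G', s, b') Ys"
      by (rule converse_core[OF bm GG' ZG' agree zs[folded Z_def] Ys _ XsG si[unfolded m_def] a2(1)[unfolded m_def] hyp'],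
          use len m_def in simp)
    then show ?thesis using Xsf by blast
  qed
qed

lemma ext_eq:
  fixes b b' :: "'a \<Rightarrow> 'a \<Rightarrow> 'r::idom"
  assumes bm: "based_matrix (G, s, b)" "based_matrix (G', s, b')"
    and g1: "g1 \<notin> G" and g2: "g2 \<notin> G" and G': "G' = G \<union> {g1, g2}"
    and agree: "\<forall>x\<in>G. \<forall>y\<in>G. b' x y = b x y"
    and zs: "\<forall>y\<in>G. (\<Sum>x\<in>{g1, g2}. b' x y) = d * b s y"
  shows "genus (G, s, b) = genus (G', s, b')"
proof (rule antisym)
  have ZG: "{g1, g2} \<inter> G = {}" using g1 g2 by auto
  have cZ: "card {g1, g2} \<le> 2" by (simp add: card_insert_if)
  show "genus (G', s, b') \<le> genus (G, s, b)"
    by (rule genus_le[OF filling_exists[OF bm(1)]], rule forward[OF bm ZG G' cZ agree zs])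
  show "genus (G, s, b) \<le> genus (G', s, b')"
    by (rule genus_le[OF filling_exists[OF bm(2)]], rule converse[OF bm g1 g2 G' agree zs])
qed

lemma elem_ext_eq:
  fixes T T' :: "('a, 'r::idom) based_matrix"
  assumes "elem_ext T T'"
  shows "genus T = genus T'"
proof -
  obtain G s b where T: "T = (G, s, b)" by (cases T) auto
  obtain G' s' b' where T': "T' = (G', s', b')" by (cases T') auto
  from assms consider (m1) "ext_M1 T T'" | (m2) "ext_M2 T T'" | (m3) "ext_M3 T T'"
    unfolding elem_ext_def by blast
  then show ?thesis
  proof cases
    case m1
    then obtain g where hs: "s' = s" and bm: "based_matrix (G, s, b)" "based_matrix (G', s, b')"
      and g: "g \<notin> G" "G' = insert g G" "\<forall>x\<in>G. \<forall>y\<in>G. b' x y = b x y" "\<forall>h\<in>G'. b' g h = 0"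
      unfolding ext_M1_def T T' prod.case by blast
    have G': "G' = G \<union> {g, g}" using g(2) by auto
    have zs: "\<forall>y\<in>G. (\<Sum>x\<in>{g, g}. b' x y) = 0 * b s y" using g(2,4) by simp
    show ?thesis unfolding T T' hs by (rule ext_eq[OF bm g(1) g(1) G' g(3) zs])
  next
    case m2
    then obtain g where hs: "s' = s" and bm: "based_matrix (G, s, b)" "based_matrix (G', s, b')"
      and g: "g \<notin> G" "G' = insert g G" "\<forall>x\<in>G. \<forall>y\<in>G. b' x y = b x y" "\<forall>h\<in>G. b' g h = b s h"
      unfolding ext_M2_def T T' prod.case by blast
    have G': "G' = G \<union> {g, g}" using g(2) by auto
    have zs: "\<forall>y\<in>G. (\<Sum>x\<in>{g, g}. b' x y) = 1 * b s y" using g(4) by simp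
    show ?thesis unfolding T T' hs by (rule ext_eq[OF bm g(1) g(1) G' g(3) zs])
  next
    case m3
    then obtain g1 g2 where hs: "s' = s" and bm: "based_matrix (G, s, b)" "based_matrix (G', s, b')"
      and g: "g1 \<notin> G" "g2 \<notin> G" "g1 \<noteq> g2" "G' = insert g1 (insert g2 G)"
        "\<forall>x\<in>G. \<forall>y\<in>G. b' x y = b x y" "\<forall>h\<in>G. b' g1 h + b' g2 h = b s h"
      unfolding ext_M3_def T T' prod.case by blast
    have G': "G' = G \<union> {g1, g2}" using g(4) by auto
    have zs: "\<forall>y\<in>G. (\<Sum>x\<in>{g1, g2}. b' x y) = 1 * b s y" using g(3,6) by simp
    show ?thesis unfolding T T' hs by (rule ext_eq[OF bm g(1) g(2) G' g(5) zs])
  qed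
qed

theorem lemma7p1:
  fixes T T' :: "('a, 'r::idom) based_matrix"
  assumes "homologous T T'"
  shows "genus T = genus T'"
  using assms
proof (induction rule: homologous.induct)
  case (iso T T')
  then show ?case using iso_le[OF iso] iso_le[OF iso_sym[OF iso]] by simp
next
  case (ext T T')
  then show ?case by (rule elem_ext_eq)
next
  case (ext_inv T' T)
  then show ?case using elem_ext_eq[OF ext_inv] by simp
next
  case (trans T1 T2 T3)
  then show ?case by simp
qed

end
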